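(* Let $D\subset\mathbb{C}^n$ be a domain and let $f:D\to\mathbb{C}^m$ be a $\mathcal{C}^1$ map such that for every $p\in D$ either $\frac{\partial f}{\partial z}(p)=0$ or $\frac{\partial f}{\partial\bar z}(p)=0$. Then $f$ is holomorphic or antiholomorphic on $D$.
   Context: For $f=(f_1,\dots,f_m)$, $\frac{\partial f}{\partial z}(p)=0$ means $\frac{\partial f_j}{\partial z_k}(p)=0$ for all $j=1,\dots,m$ and $k=1,\dots,n$, and similarly $\frac{\partial f}{\partial\bar z}(p)=0$ means $\frac{\partial f_j}{\partial\bar z_k}(p)=0$ for all $j,k$ (equivalently, the real derivative of $f$ at $p$ is anti-$\mathbb{C}$-linear, resp. $\mathbb{C}$-linear). *)

theory Defs
  imports "HOL-Analysis.Analysis"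
begin

text \<open>Points of C^n are vectors complex^'n (n = CARD('n)); maps C^n to C^m are
functions complex^'n to complex^'m.  Differentiability is real (Frechet).\<close>

definition C1_on :: "(complex^'n) set \<Rightarrow> (complex^'n \<Rightarrow> complex^'m) \<Rightarrow> bool" where
  "C1_on D f \<longleftrightarrow> (\<exists>f' :: complex^'n \<Rightarrow> ((complex^'n) \<Rightarrow>\<^sub>L (complex^'m)).
      (\<forall>x\<in>D. (f has_derivative blinfun_apply (f' x)) (at x)) \<and> continuous_on D f')"

text \<open>With d/dx_k = derivative in direction e_k
and d/dy_k = derivative in direction i e_k:
  d/dz_k = (d/dx_k - i d/dy_k)/2,  d/dzbar_k = (d/dx_k + i d/dy_k)/2.\<close>
definition dz :: "(complex^'n \<Rightarrow> complex^'m) \<Rightarrow> complex^'n \<Rightarrow> 'n \<Rightarrow> complex^'m" where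
  "dz f p k = (1/2 :: complex) *s
     (frechet_derivative f (at p) (axis k 1) - \<i> *s frechet_derivative f (at p) (axis k \<i>))"

definition dzbar :: "(complex^'n \<Rightarrow> complex^'m) \<Rightarrow> complex^'n \<Rightarrow> 'n \<Rightarrow> complex^'m" where
  "dzbar f p k = (1/2 :: complex) *s
     (frechet_derivative f (at p) (axis k 1) + \<i> *s frechet_derivative f (at p) (axis k \<i>))"

definition holomorphic_Cn :: "(complex^'n) set \<Rightarrow> (complex^'n \<Rightarrow> complex^'m) \<Rightarrow> bool" where
  "holomorphic_Cn D f \<longleftrightarrow> (\<forall>p\<in>D. f differentiable (at p) \<and> (\<forall>k. dzbar f p k = 0))"

definition antiholomorphic_Cn :: "(complex^'n) set \<Rightarrow> (complex^'n \<Rightarrow> complex^'m) \<Rightarrow> bool" where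
  "antiholomorphic_Cn D f \<longleftrightarrow> (\<forall>p\<in>D. f differentiable (at p) \<and> (\<forall>k. dz f p k = 0))"

end

theory Submission
  imports Defs "HOL-Complex_Analysis.Complex_Analysis"
begin

lemma vec_decomp:
  fixes v :: "complex^'n"
  shows "v = (\<Sum>k\<in>UNIV. Re (v$k) *\<^sub>R axis k 1 + Im (v$k) *\<^sub>R axis k \<i>)"
  by (simp add: vec_eq_iff sum_component axis_def complex_eq_iff if_distrib cong: if_cong)

lemma scal_id: "Re v *\<^sub>R X + Im v *\<^sub>R Y = v * ((1/2) * (X - \<i> * Y)) + cnj v * ((1/2) * (X + \<i> * Y))"
proof -
  have "v = of_real (Re v) + \<i> * of_real (Im v)" by (simp add: complex_eq_iff)
  then have "v * ((1/2) * (X - \<i> * Y)) + cnj v * ((1/2) * (X + \<i> * Y)) = (of_real (Re v) + \<i> * of_real (Im v)) * ((1/2) * (X - \<i> * Y)) + (of_real (Re v) - \<i> * of_real (Im v)) * ((1/2) * (X + \<i> * Y))"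
    by (metis complex_cnj_add complex_cnj_complex_of_real complex_cnj_i complex_cnj_mult mult_minus_left diff_conv_add_uminus)
  also have "\<dots> = Re v *\<^sub>R X + Im v *\<^sub>R Y"
    by (simp add: scaleR_conv_of_real field_simps)
  finally show ?thesis by simp
qed

lemma deriv_ident:
  fixes F :: "complex^'n \<Rightarrow> complex^'m"
  assumes "linear F"
  shows "F v = (\<Sum>k\<in>UNIV. (v$k) *s ((1/2::complex) *s (F (axis k 1) - \<i> *s F (axis k \<i>)))
                 + cnj (v$k) *s ((1/2::complex) *s (F (axis k 1) + \<i> *s F (axis k \<i>))))"
proof -
  have "F v = (\<Sum>k\<in>UNIV. Re (v$k) *\<^sub>R F (axis k 1) + Im (v$k) *\<^sub>R F (axis k \<i>))"
    by (subst vec_decomp) (simp add: linear_sum[OF assms] linear_add[OF assms] linear_scale[OF assms])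
  also have "\<dots> = (\<Sum>k\<in>UNIV. (v$k) *s ((1/2::complex) *s (F (axis k 1) - \<i> *s F (axis k \<i>)))
                 + cnj (v$k) *s ((1/2::complex) *s (F (axis k 1) + \<i> *s F (axis k \<i>))))"
    by (rule sum.cong, simp, simp only: vec_eq_iff vector_add_component vector_scaleR_component vector_smult_component vector_minus_component scal_id, simp)
  finally show ?thesis .
qed

lemma norm_smult_vec: "norm ((t::complex) *s (e::complex^'n)) = norm t * norm e"
  by (simp add: norm_vec_def vector_scalar_mult_def norm_mult L2_set_right_distrib)

lemma norm_axis_c: "norm (axis k (x::complex) :: complex^'n) = norm x"
proof -
  have "(\<Sum>i\<in>UNIV. (norm ((axis k x :: complex^'n) $ i))^2) = (\<Sum>i\<in>UNIV. if i = k then (norm x)^2 else 0)"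
    by (rule sum.cong) (auto simp: axis_def)
  then show ?thesis by (simp add: norm_vec_def L2_set_def)
qed

definition hv :: "(complex^'n \<Rightarrow> complex^'m) \<Rightarrow> complex^'n \<Rightarrow> complex^'n \<Rightarrow> complex^'m" where
  "hv f e w = (\<Sum>k\<in>UNIV. (e$k) *s dz f w k)"

lemma hv_add: "hv f (a + b) w = hv f a w + hv f b w"
  by (simp add: hv_def vector_sadd_rdistrib sum.distrib)

lemma hv_axis: "hv f (axis k c) w = c *s dz f w k"
proof -
  have "hv f (axis k c) w = (\<Sum>l\<in>UNIV. (if l = k then c *s dz f w k else 0))"
    unfolding hv_def by (rule sum.cong) (auto simp: axis_def)
  then show ?thesis by simp
qed

lemma hv_smult: "hv f (t *s e) w = t *s hv f e w"
  by (simp add: hv_def vec_eq_iff sum_component sum_distrib_left mult.assoc)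

lemma hv_comp: "hv f e w $ j = (\<Sum>k\<in>UNIV. e$k * dz f w k $ j)"
  by (simp add: hv_def sum_component)

lemma linear_smult_e: "linear (\<lambda>t::complex. t *s (e::complex^'n))"
  by (rule linearI) (simp_all add: vec_eq_iff vector_scaleR_component algebra_simps)


lemma dz_eq:
  assumes "(f has_derivative blinfun_apply F) (at w)"
  shows "dz f w k = (1/2::complex) *s (blinfun_apply F (axis k 1) - \<i> *s blinfun_apply F (axis k \<i>))"
    and "dzbar f w k = (1/2::complex) *s (blinfun_apply F (axis k 1) + \<i> *s blinfun_apply F (axis k \<i>))"
  using frechet_derivative_at[OF assms] by (simp_all add: dz_def dzbar_def)

lemma hol_deriv:
  assumes "(f has_derivative blinfun_apply F) (at w)" "\<forall>k. dzbar f w k = 0"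
  shows "blinfun_apply F v = hv f v w"
proof -
  have lin: "linear (blinfun_apply F)" by (simp add: blinfun.bounded_linear_right bounded_linear.linear)
  show ?thesis
  proof -
    have "blinfun_apply F v = (\<Sum>k\<in>UNIV. v$k *s dz f w k + cnj (v$k) *s dzbar f w k)"
      using deriv_ident[OF lin, of v] by (simp only: dz_eq[OF assms(1)])
    then show ?thesis by (simp add: assms(2) hv_def)
  qed
qed

lemma cont_dz:
  assumes der: "\<forall>x\<in>D. (f has_derivative blinfun_apply (F' x)) (at x)"
    and cont: "continuous_on D F'"
  shows "continuous_on D (\<lambda>w. dz f w k)" "continuous_on D (\<lambda>w. dzbar f w k)"
proof -
  have "continuous_on D (\<lambda>w. (1/2::complex) *s (blinfun_apply (F' w) (axis k 1) - \<i> *s blinfun_apply (F' w) (axis k \<i>)))"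
    unfolding vector_scalar_mult_def by (intro continuous_intros cont)
  then show "continuous_on D (\<lambda>w. dz f w k)"
    by (rule continuous_on_eq) (simp add: dz_eq(1)[OF der[rule_format]])
  have "continuous_on D (\<lambda>w. (1/2::complex) *s (blinfun_apply (F' w) (axis k 1) + \<i> *s blinfun_apply (F' w) (axis k \<i>)))"
    unfolding vector_scalar_mult_def by (intro continuous_intros cont)
  then show "continuous_on D (\<lambda>w. dzbar f w k)"
    by (rule continuous_on_eq) (simp add: dz_eq(2)[OF der[rule_format]])
qed


lemma KL:
  fixes f :: "complex^'n \<Rightarrow> complex^'m"
  assumes der: "\<forall>x\<in>D. (f has_derivative blinfun_apply (F' x)) (at x)"
    and cont: "continuous_on D F'"
    and alt: "\<forall>p\<in>D. (\<forall>k. dz f p k = 0) \<or> (\<forall>k. dzbar f p k = 0)"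
    and r: "r > 0" and A: "\<forall>w\<in>ball q r. \<forall>k. dz f w k = 0"
    and sub: "cball q d \<subseteq> D" and z: "dist q z < d"
  shows "hv f (z - q) z = 0"
proof (cases "z = q")
  case True then show ?thesis by (simp add: hv_def)
next
  case False
  define e where "e = z - q"
  have ne: "norm e > 0" using False by (simp add: e_def)
  define T where "T = d / norm e"
  have T1: "T > 1" using z ne by (simp add: T_def dist_norm e_def norm_minus_commute field_simps)
  define \<gamma> where "\<gamma> t = q + t *s e" for t
  have d\<gamma>: "dist q (\<gamma> t) = norm t * norm e" for t
    by (simp add: \<gamma>_def dist_norm norm_smult_vec)
  have \<gamma>D: "\<gamma> t \<in> D" if "norm t \<le> T" for t
  proof -
    have "norm t * norm e \<le> d" using that ne by (simp add: T_def field_simps)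
    then show ?thesis using sub d\<gamma>[of t] by (auto simp: subset_iff)
  qed
  have \<gamma>1: "\<gamma> 1 = z" by (simp add: \<gamma>_def e_def)
  have contdz: "continuous_on D (\<lambda>w. dz f w k)" for k using cont_dz[OF der cont] by blast
  have cont\<gamma>: "continuous_on UNIV \<gamma>" unfolding \<gamma>_def vector_scalar_mult_def by (intro continuous_intros)
  have "hv f e z $ j = 0" for j
  proof (rule ccontr)
    assume nz: "hv f e z $ j \<noteq> 0"
    define s where "s t = hv f e (\<gamma> t) $ j" for t
    have conts: "continuous_on (cball 0 T) s"
    proof -
      have "continuous_on D (\<lambda>w. hv f e w $ j)" unfolding hv_comp by (intro continuous_intros contdz)
      moreover have "continuous_on (cball 0 T) \<gamma>" using cont\<gamma> continuous_on_subset by blast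
      moreover have "\<gamma> ` cball 0 T \<subseteq> D" using \<gamma>D by auto
      ultimately show ?thesis unfolding s_def by (rule continuous_on_compose2)
    qed
    have s0: "s t = 0" if "norm t < r / norm e" for t
    proof -
      have "\<gamma> t \<in> ball q r" using that ne d\<gamma>[of t] by (simp add: field_simps)
      then show ?thesis using A by (simp add: s_def hv_def)
    qed
    define S where "S = {t. norm t < T \<and> s t \<noteq> 0}"
    have S_eq: "S = ball 0 T \<inter> s -` (-{0})" by (auto simp: S_def)
    have openS: "open S" unfolding S_eq
      by (rule continuous_open_preimage) (use conts continuous_on_subset[OF conts ball_subset_cball] in auto)
    have Bhol: "\<forall>k. dzbar f (\<gamma> t) k = 0" if "t \<in> S" for t
    proof -
      have "\<gamma> t \<in> D" using that \<gamma>D by (auto simp: S_def)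
      moreover have "\<not> (\<forall>k. dz f (\<gamma> t) k = 0)"
      proof
        assume "\<forall>k. dz f (\<gamma> t) k = 0"
        then have "s t = 0" by (simp add: s_def hv_def)
        with that show False by (simp add: S_def)
      qed
      ultimately show ?thesis using alt by blast
    qed
    define G where "G t = f (\<gamma> t) $ j" for t
    have Gder: "(G has_field_derivative s t) (at t)" if "t \<in> S" for t
    proof -
      have tD: "\<gamma> t \<in> D" using that \<gamma>D by (auto simp: S_def)
      have d\<gamma>': "(\<gamma> has_derivative (\<lambda>\<tau>. \<tau> *s e)) (at t)"
      proof -
        have "((\<lambda>t. t *s e) has_derivative (\<lambda>\<tau>. \<tau> *s e)) (at t)"
          using linear_smult_e[of e] by (simp add: linear_conv_bounded_linear bounded_linear_imp_has_derivative)
        then show ?thesis unfolding \<gamma>_def by (intro derivative_eq_intros) auto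
      qed
      have "((\<lambda>t. f (\<gamma> t)) has_derivative (\<lambda>\<tau>. blinfun_apply (F' (\<gamma> t)) (\<tau> *s e))) (at t)"
        using diff_chain_at[OF d\<gamma>' der[rule_format, OF tD]] by (simp add: o_def)
      then have "(G has_derivative (\<lambda>\<tau>. blinfun_apply (F' (\<gamma> t)) (\<tau> *s e) $ j)) (at t)"
        unfolding G_def by (rule bounded_linear.has_derivative[OF bounded_linear_vec_nth])
      moreover have "blinfun_apply (F' (\<gamma> t)) (\<tau> *s e) $ j = s t * \<tau>" for \<tau>
        using hol_deriv[OF der[rule_format, OF tD] Bhol[OF that]] by (simp add: hv_smult s_def mult.commute)
      ultimately show ?thesis by (simp add: has_field_derivative_def)
    qed
    have Ghol: "G holomorphic_on S"
      unfolding holomorphic_on_def field_differentiable_def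
      using Gder has_field_derivative_at_within by blast
    have shol: "s holomorphic_on S"
    proof -
      have "deriv G holomorphic_on S" by (rule holomorphic_deriv[OF Ghol openS])
      moreover have "deriv G t = s t" if "t \<in> S" for t using Gder[OF that] by (rule DERIV_imp_deriv)
      ultimately show ?thesis by (rule holomorphic_transform)
    qed
    have S0: "t \<noteq> 0" if "t \<in> S" for t
      using that s0[of 0] r ne by (auto simp: S_def)
    obtain M where M: "\<forall>t\<in>cball 0 T. norm (s t) \<le> M"
      using compact_imp_bounded[OF compact_continuous_image[OF conts compact_cball]] by (auto simp: bounded_iff)
    have M0: "0 \<le> M" using M[rule_format, of 0] T1 norm_ge_zero[of "s 0"] by (auto simp del: norm_ge_zero)
    have clS: "closure S \<subseteq> {t. norm t \<le> T \<and> r / norm e \<le> norm t}"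
    proof (rule closure_minimal)
      show "S \<subseteq> {t. norm t \<le> T \<and> r / norm e \<le> norm t}"
        using s0 by (force simp: S_def not_less[symmetric])
      show "closed {t. norm t \<le> T \<and> r / norm e \<le> norm t}"
        by (intro closed_Collect_conj closed_Collect_le continuous_intros)
    qed
    have bound: "norm (s 1) \<le> M / T ^ N" for N
    proof -
      define g where "g t = s t / t ^ N" for t
      have "norm (g 1) \<le> M / T ^ N"
      proof (rule maximum_modulus_frontier[where S=S and f=g and \<xi>=1])
        have "(\<lambda>t. s t / t^N) holomorphic_on S" by (intro holomorphic_intros shol) (use S0 in auto)
        then show "g holomorphic_on interior S" by (simp add: g_def[abs_def] interior_open[OF openS])
        show "continuous_on (closure S) g"
        proof (rule continuous_on_subset[OF _ clS])
          have "continuous_on {t. norm t \<le> T \<and> r / norm e \<le> norm t} s"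
            by (rule continuous_on_subset[OF conts]) auto
          moreover have "(t::complex) ^ N \<noteq> 0" if "t \<in> {t. norm t \<le> T \<and> r / norm e \<le> norm t}" for t
          proof -
            have "0 < r / norm e" using r ne by simp
            then have "t \<noteq> 0" using that by auto
            then show ?thesis by simp
          qed
          ultimately show "continuous_on {t. norm t \<le> T \<and> r / norm e \<le> norm t} g"
            unfolding g_def by (intro continuous_intros) auto
        qed
        show "bounded S" by (rule bounded_subset[OF bounded_ball[of 0 T]]) (auto simp: S_def)
        show "norm (g t) \<le> M / T^N" if "t \<in> frontier S" for t
        proof -
          have tc: "t \<in> closure S" "t \<notin> S" using that openS by (auto simp: frontier_def interior_open)
          then have nt: "norm t \<le> T" "r / norm e \<le> norm t" using clS by auto
          show ?thesis
          proof (cases "norm t < T")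
            case True then have "s t = 0" using tc(2) by (auto simp: S_def)
            then show ?thesis using M0 T1 by (simp add: g_def)
          next
            case False then have "norm t = T" using nt by auto
            then show ?thesis using M nt T1 by (simp add: g_def norm_divide norm_power divide_right_mono)
          qed
        qed
        show "1 \<in> S" using nz T1 \<gamma>1 by (simp add: S_def s_def)
      qed
      then show ?thesis by (simp add: g_def)
    qed
    have pos: "norm (s 1) / (M + 1) > 0" using nz M0 \<gamma>1 by (simp add: s_def)
    obtain N where N: "(1/T)^N < norm (s 1) / (M+1)"
      using real_arch_pow_inv[OF pos, of "1/T"] T1 by auto
    have "M / T^N \<le> (M+1) * (1/T)^N" using T1 by (simp add: power_one_over divide_right_mono)
    also have "\<dots> < norm (s 1)" using N M0 by (simp add: field_simps)
    finally show False using bound[of N] by simp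
  qed
  then show ?thesis by (simp add: vec_eq_iff e_def)
qed


theorem lemma9:
  fixes D :: "(complex^'n) set" and f :: "complex^'n \<Rightarrow> complex^'m"
  assumes "open D" and "connected D"
    and "C1_on D f"
    and "\<forall>p\<in>D. (\<forall>k. dz f p k = 0) \<or> (\<forall>k. dzbar f p k = 0)"
  shows "holomorphic_Cn D f \<or> antiholomorphic_Cn D f"
proof -
  obtain F' where der: "\<forall>x\<in>D. (f has_derivative blinfun_apply (F' x)) (at x)"
    and cont: "continuous_on D F'"
    using assms(3) unfolding C1_on_def by blast
  have diff: "\<forall>p\<in>D. f differentiable (at p)" using der differentiable_def by blast
  show ?thesis
  proof (cases "\<forall>p\<in>D. \<forall>k. dzbar f p k = 0")
    case True then show ?thesis using diff by (simp add: holomorphic_Cn_def)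
  next
    case False
    then obtain p0 k0 where p0: "p0 \<in> D" "dzbar f p0 k0 \<noteq> 0" by blast
    define V where "V = {q. \<exists>r>0. \<forall>w\<in>ball q r. \<forall>k. dz f w k = 0}"
    have openV: "open V"
      unfolding open_contains_ball
    proof
      fix q assume "q \<in> V"
      then obtain r where r: "r>0" "\<forall>w\<in>ball q r. \<forall>k. dz f w k = 0" by (auto simp: V_def)
      have "ball q r \<subseteq> V"
      proof
        fix x assume x: "x \<in> ball q r"
        have "ball x (r - dist q x) \<subseteq> ball q r"
        proof
          fix w assume "w \<in> ball x (r - dist q x)"
          then show "w \<in> ball q r" using dist_triangle[of q w x] by auto
        qed
        then show "x \<in> V" using r x unfolding V_def by (auto intro!: exI[of _ "r - dist q x"])
      qed
      then show "\<exists>e>0. ball q e \<subseteq> V" using r by blast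
    qed
    have p0V: "p0 \<in> V"
    proof -
      have "continuous_on D (\<lambda>w. dzbar f w k0)" using cont_dz[OF der cont] by blast
      then obtain r1 where r1: "r1 > 0" "\<forall>w\<in>D. dist w p0 < r1 \<longrightarrow> dist (dzbar f w k0) (dzbar f p0 k0) < norm (dzbar f p0 k0)"
      proof -
        have "norm (dzbar f p0 k0) > 0" using p0 by simp
        then have "\<exists>d>0. \<forall>x'\<in>D. dist x' p0 < d \<longrightarrow> dist (dzbar f x' k0) (dzbar f p0 k0) < norm (dzbar f p0 k0)"
          using \<open>continuous_on D (\<lambda>w. dzbar f w k0)\<close> p0(1) unfolding continuous_on_iff by simp
        then show ?thesis using that by blast
      qed
      have "\<exists>r2>0. ball p0 r2 \<subseteq> D" using open_contains_ball[THEN iffD1, OF assms(1)] p0(1) by (rule bspec)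
      then obtain r2 where r2: "r2 > 0" "ball p0 r2 \<subseteq> D" by (elim exE conjE) simp
      have "\<forall>w\<in>ball p0 (min r1 r2). \<forall>k. dz f w k = 0"
      proof
        fix w assume w: "w \<in> ball p0 (min r1 r2)"
        then have wD: "w \<in> D" using r2 by auto
        have "dist (dzbar f w k0) (dzbar f p0 k0) < norm (dzbar f p0 k0)"
          using r1(2) wD w by (auto simp: dist_commute)
        then have "dzbar f w k0 \<noteq> 0" by auto
        then show "\<forall>k. dz f w k = 0" using assms(4) wD by blast
      qed
      then show ?thesis unfolding V_def using r1 r2 by (auto intro!: exI[of _ "min r1 r2"])
    qed
    have closedV: "p \<in> V" if "p \<in> D" "p \<in> closure V" for p
    proof -
      have "\<exists>\<epsilon>>0. cball p \<epsilon> \<subseteq> D" using open_contains_cball[THEN iffD1, OF assms(1)] that(1) by (rule bspec)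
      then obtain \<epsilon> where \<epsilon>: "\<epsilon>>0" "cball p \<epsilon> \<subseteq> D" by (elim exE conjE) simp
      define d where "d = \<epsilon> / 3"
      have d: "d > 0" "cball p (3*d) \<subseteq> D" using \<epsilon> by (auto simp: d_def)
      have d4: "d/4 > 0" using d by simp
      have "\<exists>q\<in>V. dist q p < d/4" by (rule that(2)[unfolded closure_approachable, rule_format, OF d4])
      then obtain q where q: "q \<in> V" "dist q p < d/4" by (elim bexE) simp
      obtain r0 where r0: "r0>0" "\<forall>w\<in>ball q r0. \<forall>k. dz f w k = 0" using q by (auto simp: V_def)
      define \<rho> where "\<rho> = min r0 (d/4)"
      have \<rho>: "\<rho> > 0" using r0 d by (simp add: \<rho>_def)
      have "\<forall>w\<in>ball p (d/2). \<forall>k. dz f w k = 0"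
      proof (intro ballI allI)
        fix z k assume z: "z \<in> ball p (d/2)"
        have H: "hv f (z - q') z = 0" if "dist q q' < \<rho>" for q'
        proof (rule KL[OF der cont assms(4), where r = "r0 - dist q q'" and d = "2*d"])
          show "r0 - dist q q' > 0" using that by (simp add: \<rho>_def)
          show "\<forall>w\<in>ball q' (r0 - dist q q'). \<forall>k. dz f w k = 0"
          proof
            fix w assume "w \<in> ball q' (r0 - dist q q')"
            then have "dist q' w < r0 - dist q q'" by simp
            then have "dist q w < r0" using dist_triangle[of q w q'] by linarith
            then show "\<forall>k. dz f w k = 0" using r0(2) by simp
          qed
          show "cball q' (2*d) \<subseteq> D"
          proof
            fix x assume "x \<in> cball q' (2*d)"
            then have "dist q' x \<le> 2*d" by simp
            moreover have "dist p q = dist q p" by (rule dist_commute)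
            moreover have "\<rho> \<le> d/4" by (simp add: \<rho>_def)
            ultimately have "dist p x \<le> 3*d"
              using dist_triangle[of p x q'] dist_triangle[of p q' q] q(2) that d(1) by linarith 
            then show "x \<in> D" using d(2) by auto
          qed
          have "dist p z < d/2" using z by simp
          moreover have "dist q' q = dist q q'" by (rule dist_commute)
          moreover have "\<rho> \<le> d/4" by (simp add: \<rho>_def)
          ultimately show "dist q' z < 2*d"
            using dist_triangle[of q' z p] dist_triangle[of q' p q] q(2) that d(1) by linarith
        qed
        define c where "c = complex_of_real (\<rho>/2)"
        have cax: "c *s axis k 1 = (axis k c :: complex^'n)" by (simp add: vec_eq_iff axis_def)
        have "dist q (q - axis k c) < \<rho>"
          using \<rho> by (simp add: dist_norm norm_axis_c c_def)
        then have "hv f (z - (q - axis k c)) z = 0" by (rule H)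
        moreover have "z - (q - axis k c) = (z - q) + axis k c" by simp
        moreover have "hv f (z - q) z = 0" using H[of q] \<rho> by simp
        ultimately have "c *s dz f z k = 0" by (simp add: hv_add hv_axis)
        moreover have "c \<noteq> 0" using \<rho> by (simp add: c_def)
        ultimately show "dz f z k = 0" by (simp add: vec_eq_iff)
      qed
      then show "p \<in> V" unfolding V_def using d by (auto intro!: exI[of _ "d/2"])
    qed
    have "V \<inter> D = {} \<or> (- closure V) \<inter> D = {}"
    proof (rule connectedD[OF assms(2) openV])
      show "open (- closure V)" by (rule open_Compl[OF closed_closure])
      show "V \<inter> - closure V \<inter> D = {}" using closure_subset[of V] by blast
      show "D \<subseteq> V \<union> - closure V" using closedV by blast
    qed
    then have "D \<subseteq> V"
    proof
      assume "V \<inter> D = {}" then show ?thesis using p0(1) p0V by blast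
    next
      assume "- closure V \<inter> D = {}" then show ?thesis using closedV by blast
    qed
    then have "\<forall>p\<in>D. \<forall>k. dz f p k = 0" unfolding V_def using centre_in_ball by blast
    then show ?thesis using diff by (simp add: antiholomorphic_Cn_def)
  qed
qed

end
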